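(* Let $Q$ be a quantale and $M$ a $Q$-module. (a) $Q$ is precoherent if and only if $Q$ is both algebraic and blooming. (b) If $Q$ is precoherent, then $M$ is precoherent if and only if $M$ is both algebraic and blooming.
   Context: A quantale is a poset $Q$ in which every nonempty subset has a join $\sum$ (no bottom required), with top $1$ and a commutative associative multiplication with unit $1$ distributing over nonempty joins. A $Q$-module is a poset $M$ with all nonempty joins and an associative unital action distributing over nonempty joins in each variable. In a complete semilattice $L$ (all nonempty joins), $c$ is compact if $c\le\sum_{i\in I}x_i$ implies $c\le\sum_{i\in I_0}x_i$ for some finite $I_0\subseteq I$; $K(L)$ is the set of compact elements; $L$ is algebraic if $x=\sum\{c\in K(L):c\le x\}$ for all $x$. $Q$ is precoherent if it is algebraic and $K(Q)$ is closed under multiplication. For precoherent $Q$, $M$ is precoherent if $M$ is algebraic and $cm\in K(M)$ for all $c\in K(Q)$, $m\in K(M)$. Suspension: order nonempty subsets of $L$ by $S\le T$ iff each $s\in S$ is below the join of finitely many elements of $T$; $\Sigma L$ is the poset of equivalence classes; $\sigma_L:\Sigma L\to L$, $S\mapsto\sum S$. $\Sigma Q$ has multiplication $S\cdot T=\{st:s\in S,t\in T\}$ and $\Sigma Q$ acts on $\Sigma M$ by $S\cdot A=\{sa\}$. A left adjoint of $\sigma_L$ is an order-preserving $\sigma_L^\flat:L\to\Sigma L$ with $\sigma_L^\flat(x)\le S\iff x\le\sigma_L(S)$. $Q$ is blooming if $\sigma_Q$ has a left adjoint and $\sigma_Q^\flat(ab)=\sigma_Q^\flat(a)\cdot\sigma_Q^\flat(b)$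 for all $a,b\in Q$. For blooming $Q$, $M$ is blooming if $\sigma_M$ has a left adjoint and $\sigma_M^\flat(qm)=\sigma_Q^\flat(q)\cdot\sigma_M^\flat(m)$ for all $q\in Q$, $m\in M$. *)

theory Defs
  imports Main
begin

definition is_lub :: "'a::order set \<Rightarrow> 'a \<Rightarrow> bool" where
  "is_lub S x \<longleftrightarrow> (\<forall>s\<in>S. s \<le> x) \<and> (\<forall>y. (\<forall>s\<in>S. s \<le> y) \<longrightarrow> x \<le> y)"

definition complete_semilattice :: "'a::order itself \<Rightarrow> bool" where
  "complete_semilattice _ \<longleftrightarrow> (\<forall>S::'a set. S \<noteq> {} \<longrightarrow> (\<exists>x. is_lub S x))"

definition js :: "'a::order set \<Rightarrow> 'a" where
  "js S = (THE x. is_lub S x)"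

definition quantale :: "('a::order \<Rightarrow> 'a \<Rightarrow> 'a) \<Rightarrow> 'a \<Rightarrow> bool" where
  "quantale mult e \<longleftrightarrow>
     complete_semilattice TYPE('a) \<and>
     (\<forall>x. x \<le> e) \<and>
     (\<forall>a b. mult a b = mult b a) \<and>
     (\<forall>a b c. mult (mult a b) c = mult a (mult b c)) \<and>
     (\<forall>a. mult e a = a) \<and>
     (\<forall>a S. S \<noteq> {} \<longrightarrow> mult a (js S) = js (mult a ` S))"

definition qmodule :: "('q::order \<Rightarrow> 'q \<Rightarrow> 'q) \<Rightarrow> 'q \<Rightarrow> ('q \<Rightarrow> 'm::order \<Rightarrow> 'm) \<Rightarrow> bool" where
  "qmodule mult e act \<longleftrightarrow>
     complete_semilattice TYPE('m) \<and>
     (\<forall>a b m. act (mult a b) m = act a (act b m)) \<and>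
     (\<forall>m. act e m = m) \<and>
     (\<forall>S m. S \<noteq> {} \<longrightarrow> act (js S) m = js ((\<lambda>a. act a m) ` S)) \<and>
     (\<forall>a T. T \<noteq> {} \<longrightarrow> act a (js T) = js (act a ` T))"

(* compactness; finite subfamilies must be nonempty since no bottom is assumed *)
definition compact_el :: "'a::order \<Rightarrow> bool" where
  "compact_el c \<longleftrightarrow> (\<forall>S. S \<noteq> {} \<longrightarrow> c \<le> js S \<longrightarrow>
       (\<exists>S0. S0 \<subseteq> S \<and> finite S0 \<and> S0 \<noteq> {} \<and> c \<le> js S0))"

definition algebraic :: "'a::order itself \<Rightarrow> bool" where
  "algebraic _ \<longleftrightarrow> (\<forall>x::'a. is_lub {c. compact_el c \<and> c \<le> x} x)"

definition precoherent_q :: "('a::order \<Rightarrow> 'a \<Rightarrow> 'a) \<Rightarrow> bool" where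
  "precoherent_q mult \<longleftrightarrow> algebraic TYPE('a) \<and>
     (\<forall>a b. compact_el a \<longrightarrow> compact_el b \<longrightarrow> compact_el (mult a b))"

definition precoherent_m :: "('q::order \<Rightarrow> 'm::order \<Rightarrow> 'm) \<Rightarrow> bool" where
  "precoherent_m act \<longleftrightarrow> algebraic TYPE('m) \<and>
     (\<forall>c m. compact_el c \<longrightarrow> compact_el m \<longrightarrow> compact_el (act c m))"

(* Suspension: nonempty subsets with the preorder below; Sigma L is the quotient,
   represented here by representatives, equality of classes = susp_eq. *)
definition susp_le :: "'a::order set \<Rightarrow> 'a set \<Rightarrow> bool" where
  "susp_le S T \<longleftrightarrow> (\<forall>s\<in>S. \<exists>T0. T0 \<subseteq> T \<and> finite T0 \<and> T0 \<noteq> {} \<and> s \<le> js T0)"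

definition susp_eq :: "'a::order set \<Rightarrow> 'a set \<Rightarrow> bool" where
  "susp_eq S T \<longleftrightarrow> susp_le S T \<and> susp_le T S"

(* f is (a representative-level) left adjoint of sigma_L : S \<mapsto> js S *)
definition sigma_left_adjoint :: "('a::order \<Rightarrow> 'a set) \<Rightarrow> bool" where
  "sigma_left_adjoint f \<longleftrightarrow>
     (\<forall>x. f x \<noteq> {}) \<and>
     (\<forall>x y. x \<le> y \<longrightarrow> susp_le (f x) (f y)) \<and>
     (\<forall>x S. S \<noteq> {} \<longrightarrow> (susp_le (f x) S \<longleftrightarrow> x \<le> js S))"

definition set_mult :: "('a \<Rightarrow> 'b \<Rightarrow> 'c) \<Rightarrow> 'a set \<Rightarrow> 'b set \<Rightarrow> 'c set" where
  "set_mult m S T = {m s t | s t. s \<in> S \<and> t \<in> T}"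

definition blooming_q :: "('a::order \<Rightarrow> 'a \<Rightarrow> 'a) \<Rightarrow> bool" where
  "blooming_q mult \<longleftrightarrow> (\<exists>f. sigma_left_adjoint f \<and>
     (\<forall>a b. susp_eq (f (mult a b)) (set_mult mult (f a) (f b))))"

definition blooming_m :: "('q::order \<Rightarrow> 'q \<Rightarrow> 'q) \<Rightarrow> ('q \<Rightarrow> 'm::order \<Rightarrow> 'm) \<Rightarrow> bool" where
  "blooming_m mult act \<longleftrightarrow> blooming_q mult \<and>
     (\<exists>fQ g. sigma_left_adjoint fQ \<and> sigma_left_adjoint g \<and>
        (\<forall>q m. susp_eq (g (act q m)) (set_mult act (fQ q) (g m))))"

end

theory Submission
  imports Defs
begin

abbreviation csl :: "'a::order itself \<Rightarrow> bool" where "csl t \<equiv> complete_semilattice t"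

lemma lub_unique: "is_lub S x \<Longrightarrow> is_lub S y \<Longrightarrow> x = y"
  unfolding is_lub_def by (meson order_antisym)

lemma js_eq: "is_lub S x \<Longrightarrow> js S = x"
  unfolding js_def using lub_unique by blast

lemma js_lub: "complete_semilattice TYPE('a::order) \<Longrightarrow> (S::'a set) \<noteq> {} \<Longrightarrow> is_lub S (js S)"
proof -
  assume c: "complete_semilattice TYPE('a::order)" and ne: "S \<noteq> {}"
  then obtain x where x: "is_lub S x" unfolding complete_semilattice_def by blast
  have "js S = x" using x by (rule js_eq)
  then show ?thesis using x by simp
qed

lemma js_upper: "complete_semilattice TYPE('a::order) \<Longrightarrow> (s::'a) \<in> S \<Longrightarrow> s \<le> js S"
  using js_lub[of S] unfolding is_lub_def by blast

lemma js_least: "complete_semilattice TYPE('a::order) \<Longrightarrow> (S::'a set) \<noteq> {} \<Longrightarrow> (\<forall>s\<in>S. s \<le> y) \<Longrightarrow> js S \<le> y"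
  using js_lub[of S] unfolding is_lub_def by blast

lemma js_single: "js {c} = c"
  by (rule js_eq) (auto simp: is_lub_def)

lemma js_mono: "complete_semilattice TYPE('a::order) \<Longrightarrow> (S::'a set) \<noteq> {} \<Longrightarrow> S \<subseteq> T \<Longrightarrow> js S \<le> js T"
  by (meson js_least js_upper subsetD)

lemma susp_le_subset: "X \<subseteq> Y \<Longrightarrow> susp_le X Y"
  unfolding susp_le_def
proof
  fix s assume "X \<subseteq> Y" "s \<in> X"
  then show "\<exists>T0. T0 \<subseteq> Y \<and> finite T0 \<and> T0 \<noteq> {} \<and> s \<le> js T0"
    by (intro exI[of _ "{s}"]) (auto simp: js_single)
qed

lemma susp_le_refl: "susp_le X X"
  by (rule susp_le_subset) simp

lemma key:
  assumes c: "complete_semilattice TYPE('a::order)" and fin: "finite (X::'a set)" and ne: "X \<noteq> {}"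
    and le: "susp_le X S"
  shows "\<exists>T. T \<subseteq> S \<and> finite T \<and> T \<noteq> {} \<and> js X \<le> js T"
proof -
  have "\<forall>x\<in>X. \<exists>T0. T0 \<subseteq> S \<and> finite T0 \<and> T0 \<noteq> {} \<and> x \<le> js T0"
    using le unfolding susp_le_def by blast
  then have "\<exists>F. \<forall>x\<in>X. F x \<subseteq> S \<and> finite (F x) \<and> F x \<noteq> {} \<and> x \<le> js (F x)"
    by (rule bchoice)
  then obtain F where F: "\<forall>x\<in>X. F x \<subseteq> S \<and> finite (F x) \<and> F x \<noteq> {} \<and> x \<le> js (F x)"
    by blast
  define T where "T = (\<Union>x\<in>X. F x)"
  have "T \<subseteq> S" "finite T" "T \<noteq> {}" using F fin ne unfolding T_def by auto
  moreover have "js X \<le> js T"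
  proof (rule js_least[OF c ne], intro ballI)
    fix x assume x: "x \<in> X"
    have "F x \<subseteq> T" using x unfolding T_def by auto
    moreover have "F x \<noteq> {}" using F x by blast
    ultimately have "js (F x) \<le> js T" using js_mono[OF c] by blast
    then show "x \<le> js T" using F x by (meson order_trans)
  qed
  ultimately show ?thesis by blast
qed

lemma susp_le_trans:
  assumes c: "complete_semilattice TYPE('a::order)" and "susp_le (X::'a set) Y" and "susp_le Y Z"
  shows "susp_le X Z"
  unfolding susp_le_def
proof
  fix x assume "x \<in> X"
  then obtain Y0 where Y0: "Y0 \<subseteq> Y" "finite Y0" "Y0 \<noteq> {}" "x \<le> js Y0"
    using assms(2) unfolding susp_le_def by blast
  have "susp_le Y0 Z" using assms(3) Y0(1) unfolding susp_le_def by blast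
  then obtain T where "T \<subseteq> Z \<and> finite T \<and> T \<noteq> {} \<and> js Y0 \<le> js T"
    using key[OF c Y0(2,3)] by blast
  then show "\<exists>T0\<subseteq>Z. finite T0 \<and> T0 \<noteq> {} \<and> x \<le> js T0" using Y0(4) by (meson order_trans)
qed

definition bilin :: "('a::order \<Rightarrow> 'b::order \<Rightarrow> 'c::order) \<Rightarrow> bool" where
  "bilin h \<longleftrightarrow> (\<forall>S b. S \<noteq> {} \<longrightarrow> h (js S) b = js ((\<lambda>a. h a b) ` S)) \<and>
               (\<forall>a T. T \<noteq> {} \<longrightarrow> h a (js T) = js (h a ` T))"

lemma js_pair: "x \<le> y \<Longrightarrow> js {x, y} = y"
  by (rule js_eq) (auto simp: is_lub_def)

lemma bilin_mono1:
  assumes c: "complete_semilattice TYPE('c::order)" and b: "bilin (h::'a::order \<Rightarrow> 'b::order \<Rightarrow> 'c)"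
    and le: "x \<le> x'"
  shows "h x y \<le> h x' y"
proof -
  have "h x' y = h (js {x, x'}) y" using js_pair[OF le] by simp
  also have "\<dots> = js {h x y, h x' y}" using b unfolding bilin_def
    by (metis (no_types, lifting) empty_not_insert image_empty image_insert)
  finally show ?thesis using js_upper[OF c, of "h x y" "{h x y, h x' y}"] by simp
qed

lemma bilin_mono2:
  assumes c: "complete_semilattice TYPE('c::order)" and b: "bilin (h::'a::order \<Rightarrow> 'b::order \<Rightarrow> 'c)"
    and le: "y \<le> y'"
  shows "h x y \<le> h x y'"
proof -
  have "h x y' = h x (js {y, y'})" using js_pair[OF le] by simp
  also have "\<dots> = js {h x y, h x y'}" using b unfolding bilin_def
    by (metis (no_types, lifting) empty_not_insert image_empty image_insert)
  finally show ?thesis using js_upper[OF c, of "h x y" "{h x y, h x y'}"] by simp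
qed

lemma bilin_mono:
  assumes c: "complete_semilattice TYPE('c::order)" and b: "bilin (h::'a::order \<Rightarrow> 'b::order \<Rightarrow> 'c)"
    and "x \<le> x'" "y \<le> y'"
  shows "h x y \<le> h x' y'"
  using bilin_mono1[OF c b assms(3)] bilin_mono2[OF c b assms(4)] by (meson order_trans)

lemma bilin_join:
  assumes ca: "complete_semilattice TYPE('a::order)" and cb: "complete_semilattice TYPE('b::order)"
    and c: "complete_semilattice TYPE('c::order)" and b: "bilin (h::'a \<Rightarrow> 'b \<Rightarrow> 'c)"
    and A: "A \<noteq> {}" and B: "B \<noteq> {}"
  shows "h (js A) (js B) = js (set_mult h A B)"
proof (rule order_antisym)
  have SM: "set_mult h A B \<noteq> {}" using A B unfolding set_mult_def by blast
  have "h (js A) (js B) = js (h (js A) ` B)" using b B unfolding bilin_def by blast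
  also have "\<dots> \<le> js (set_mult h A B)"
  proof (rule js_least[OF c], use B in simp, intro ballI)
    fix z assume "z \<in> h (js A) ` B"
    then obtain y where y: "y \<in> B" "z = h (js A) y" by blast
    have "z = js ((\<lambda>a. h a y) ` A)" using b A y unfolding bilin_def by blast
    also have "\<dots> \<le> js (set_mult h A B)"
      by (rule js_least[OF c], use A in simp, use y in \<open>auto intro!: js_upper[OF c] simp: set_mult_def\<close>)
    finally show "z \<le> js (set_mult h A B)" .
  qed
  finally show "h (js A) (js B) \<le> js (set_mult h A B)" .
  show "js (set_mult h A B) \<le> h (js A) (js B)"
    by (rule js_least[OF c SM]) (auto simp: set_mult_def intro!: bilin_mono[OF c b] js_upper[OF ca] js_upper[OF cb])
qed


lemma compact_bot: "(\<forall>y. x \<le> y) \<Longrightarrow> compact_el x"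
  unfolding compact_el_def
proof (intro allI impI)
  fix S :: "'a set" assume b: "\<forall>y. x \<le> y" and "S \<noteq> {}"
  then obtain s where "s \<in> S" by blast
  then show "\<exists>S0\<subseteq>S. finite S0 \<and> S0 \<noteq> {} \<and> x \<le> js S0" using b
    by (intro exI[of _ "{s}"]) (simp add: js_single)
qed

definition lowc :: "'a::order \<Rightarrow> 'a set" where
  "lowc x = {c. compact_el c \<and> c \<le> x}"

lemma lowc_js: "algebraic TYPE('a::order) \<Longrightarrow> js (lowc (x::'a)) = x"
  unfolding algebraic_def lowc_def by (rule js_eq) blast

lemma lowc_ne: assumes "algebraic TYPE('a::order)" shows "lowc (x::'a) \<noteq> {}"
proof
  assume e: "lowc x = {}"
  have "is_lub (lowc x) x" using assms unfolding algebraic_def lowc_def by blast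
  then have "\<forall>y. x \<le> y" using e unfolding is_lub_def by simp
  then have "x \<in> lowc x" using compact_bot unfolding lowc_def by auto
  then show False using e by simp
qed

lemma lowc_adj:
  assumes c: "complete_semilattice TYPE('a::order)" and a: "algebraic TYPE('a)"
  shows "sigma_left_adjoint (lowc :: 'a \<Rightarrow> 'a set)"
  unfolding sigma_left_adjoint_def
proof (intro conjI allI impI)
  fix x :: 'a show "lowc x \<noteq> {}" using lowc_ne[OF a] .
next
  fix x y :: 'a assume "x \<le> y"
  then have "lowc x \<subseteq> lowc y" unfolding lowc_def by auto
  then show "susp_le (lowc x) (lowc y)" by (rule susp_le_subset)
next
  fix x :: 'a and S :: "'a set" assume ne: "S \<noteq> {}"
  show "susp_le (lowc x) S = (x \<le> js S)"
  proof
    assume sl: "susp_le (lowc x) S"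
    have "js (lowc x) \<le> js S"
    proof (rule js_least[OF c lowc_ne[OF a]], intro ballI)
      fix s assume "s \<in> lowc x"
      then obtain T0 where "T0 \<subseteq> S" "finite T0" "T0 \<noteq> {}" "s \<le> js T0"
        using sl unfolding susp_le_def by blast
      then show "s \<le> js S" using js_mono[OF c] by (meson order_trans)
    qed
    then show "x \<le> js S" using lowc_js[OF a] by simp
  next
    assume xS: "x \<le> js S"
    show "susp_le (lowc x) S" unfolding susp_le_def
    proof
      fix s assume "s \<in> lowc x"
      then have "compact_el s" "s \<le> js S" using xS unfolding lowc_def by (auto intro: order_trans)
      then show "\<exists>T0\<subseteq>S. finite T0 \<and> T0 \<noteq> {} \<and> s \<le> js T0"
        using ne unfolding compact_el_def by blast
    qed
  qed
qed

lemma adj_below: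
  assumes c: "complete_semilattice TYPE('a::order)" and f: "sigma_left_adjoint (f :: 'a \<Rightarrow> 'a set)"
    and k: "compact_el x"
  shows "\<exists>C0. C0 \<subseteq> f x \<and> finite C0 \<and> C0 \<noteq> {} \<and> x \<le> js C0"
proof -
  have ne: "f x \<noteq> {}" using f unfolding sigma_left_adjoint_def by simp
  have adj: "\<And>S. S \<noteq> {} \<Longrightarrow> susp_le (f x) S \<longleftrightarrow> x \<le> js S"
    using f unfolding sigma_left_adjoint_def by simp
  have "x \<le> js (f x)" using adj[OF ne] susp_le_refl[of "f x"] by simp
  then have "\<exists>S0. S0 \<subseteq> f x \<and> finite S0 \<and> S0 \<noteq> {} \<and> x \<le> js S0"
    using k ne unfolding compact_el_def by simp
  then show ?thesis .
qed

lemma closure_from_bloom: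
  assumes ca: "complete_semilattice TYPE('a::order)" and cb: "complete_semilattice TYPE('b::order)"
    and c: "complete_semilattice TYPE('c::order)" and b: "bilin (h::'a \<Rightarrow> 'b \<Rightarrow> 'c)"
    and fA: "sigma_left_adjoint fA" and fB: "sigma_left_adjoint fB" and fC: "sigma_left_adjoint fC"
    and H: "susp_le (set_mult h (fA x) (fB y)) (fC (h x y))"
    and kx: "compact_el x" and ky: "compact_el y"
  shows "compact_el (h x y)"
  unfolding compact_el_def
proof (intro allI impI)
  fix S :: "'c set" assume ne: "S \<noteq> {}" and le: "h x y \<le> js S"
  obtain A0 where A0: "A0 \<subseteq> fA x" "finite A0" "A0 \<noteq> {}" "x \<le> js A0"
    using adj_below[OF ca fA kx] by blast
  obtain B0 where B0: "B0 \<subseteq> fB y" "finite B0" "B0 \<noteq> {}" "y \<le> js B0"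
    using adj_below[OF cb fB ky] by blast
  have "h x y \<le> h (js A0) (js B0)" by (rule bilin_mono[OF c b A0(4) B0(4)])
  also have "\<dots> = js (set_mult h A0 B0)" by (rule bilin_join[OF ca cb c b A0(3) B0(3)])
  finally have 1: "h x y \<le> js (set_mult h A0 B0)" .
  have "set_mult h A0 B0 = (\<lambda>(a, b). h a b) ` (A0 \<times> B0)" unfolding set_mult_def by auto
  then have fin: "finite (set_mult h A0 B0)" using A0(2) B0(2) by simp
  have sne: "set_mult h A0 B0 \<noteq> {}" using A0(3) B0(3) unfolding set_mult_def by blast
  have "set_mult h A0 B0 \<subseteq> set_mult h (fA x) (fB y)" using A0(1) B0(1) unfolding set_mult_def by blast
  then have "susp_le (set_mult h A0 B0) (fC (h x y))"
    using susp_le_subset susp_le_trans[OF c] H by blast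
  moreover have "susp_le (fC (h x y)) S" using fC le ne unfolding sigma_left_adjoint_def by simp
  ultimately have "susp_le (set_mult h A0 B0) S" using susp_le_trans[OF c] by blast
  then obtain T where "T \<subseteq> S" "finite T" "T \<noteq> {}" "js (set_mult h A0 B0) \<le> js T"
    using key[OF c fin sne] by blast
  then show "\<exists>S0\<subseteq>S. finite S0 \<and> S0 \<noteq> {} \<and> h x y \<le> js S0" using 1 by (meson order_trans)
qed

lemma bloom_from_closure:
  assumes ca: "complete_semilattice TYPE('a::order)" and cb: "complete_semilattice TYPE('b::order)"
    and c: "complete_semilattice TYPE('c::order)" and b: "bilin (h::'a \<Rightarrow> 'b \<Rightarrow> 'c)"
    and aa: "algebraic TYPE('a)" and ab: "algebraic TYPE('b)" and ac: "algebraic TYPE('c)"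
    and cl: "\<forall>x y. compact_el x \<longrightarrow> compact_el y \<longrightarrow> compact_el (h x y)"
  shows "susp_eq (lowc (h x y)) (set_mult h (lowc x) (lowc y))"
  unfolding susp_eq_def
proof
  have sne: "set_mult h (lowc x) (lowc y) \<noteq> {}"
    using lowc_ne[OF aa] lowc_ne[OF ab] unfolding set_mult_def by blast
  have "h x y = h (js (lowc x)) (js (lowc y))" using lowc_js[OF aa] lowc_js[OF ab] by simp
  also have "\<dots> = js (set_mult h (lowc x) (lowc y))"
    by (rule bilin_join[OF ca cb c b lowc_ne[OF aa] lowc_ne[OF ab]])
  finally have eq: "h x y = js (set_mult h (lowc x) (lowc y))" .
  show "susp_le (lowc (h x y)) (set_mult h (lowc x) (lowc y))"
    unfolding susp_le_def
  proof
    fix s assume "s \<in> lowc (h x y)"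
    then have "compact_el s" "s \<le> js (set_mult h (lowc x) (lowc y))" using eq unfolding lowc_def by auto
    then show "\<exists>T0\<subseteq>set_mult h (lowc x) (lowc y). finite T0 \<and> T0 \<noteq> {} \<and> s \<le> js T0"
      using sne unfolding compact_el_def by blast
  qed
  have "set_mult h (lowc x) (lowc y) \<subseteq> lowc (h x y)"
    unfolding set_mult_def lowc_def using cl bilin_mono[OF c b] by auto
  then show "susp_le (set_mult h (lowc x) (lowc y)) (lowc (h x y))" by (rule susp_le_subset)
qed


theorem mainTheorem8:
  fixes mult :: "'q::order \<Rightarrow> 'q \<Rightarrow> 'q" and e :: 'q
    and act :: "'q \<Rightarrow> 'm::order \<Rightarrow> 'm"
  assumes "quantale mult e" and "qmodule mult e act"
  shows "(precoherent_q mult \<longleftrightarrow> algebraic TYPE('q) \<and> blooming_q mult) \<and>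
         (precoherent_q mult \<longrightarrow>
            (precoherent_m act \<longleftrightarrow> algebraic TYPE('m) \<and> blooming_m mult act))"
proof -
  have cq: "complete_semilattice TYPE('q)" using assms(1) unfolding quantale_def by blast
  have cm: "complete_semilattice TYPE('m)" using assms(2) unfolding qmodule_def by blast
  have comm: "\<And>a b. mult a b = mult b a" using assms(1) unfolding quantale_def by blast
  have dR: "\<And>a S. S \<noteq> {} \<Longrightarrow> mult a (js S) = js (mult a ` S)"
    using assms(1) unfolding quantale_def by blast
  have bq: "bilin mult" unfolding bilin_def
  proof (intro conjI allI impI)
    fix S :: "'q set" and b assume "S \<noteq> {}"
    then have "mult (js S) b = js (mult b ` S)" by (subst comm) (rule dR)
    also have "mult b ` S = (\<lambda>a. mult a b) ` S" using comm by (auto intro: image_cong)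
    finally show "mult (js S) b = js ((\<lambda>a. mult a b) ` S)" .
  next
    fix a and T :: "'q set" assume "T \<noteq> {}" then show "mult a (js T) = js (mult a ` T)" by (rule dR)
  qed
  have bm: "bilin act" using assms(2) unfolding qmodule_def bilin_def by (intro conjI allI impI) simp_all
  have A: "precoherent_q mult \<longleftrightarrow> algebraic TYPE('q) \<and> blooming_q mult"
  proof
    assume p: "precoherent_q mult"
    then have aq: "algebraic TYPE('q)" and cl: "\<forall>a b. compact_el a \<longrightarrow> compact_el b \<longrightarrow> compact_el (mult a b)"
      unfolding precoherent_q_def by auto
    show "algebraic TYPE('q) \<and> blooming_q mult" unfolding blooming_q_def
      using aq lowc_adj[OF cq aq] bloom_from_closure[OF cq cq cq bq aq aq aq cl] by (intro conjI exI[of _ lowc]) auto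
  next
    assume "algebraic TYPE('q) \<and> blooming_q mult"
    then obtain f where aq: "algebraic TYPE('q)" and f: "sigma_left_adjoint f"
      and fe: "\<forall>a b. susp_eq (f (mult a b)) (set_mult mult (f a) (f b))"
      unfolding blooming_q_def by blast
    show "precoherent_q mult" unfolding precoherent_q_def
      using aq closure_from_bloom[OF cq cq cq bq f f f] fe unfolding susp_eq_def by auto
  qed
  have B: "precoherent_m act \<longleftrightarrow> algebraic TYPE('m) \<and> blooming_m mult act" if p: "precoherent_q mult"
  proof
    assume pm: "precoherent_m act"
    then have am: "algebraic TYPE('m)" and cl: "\<forall>a b. compact_el a \<longrightarrow> compact_el b \<longrightarrow> compact_el (act a b)"
      unfolding precoherent_m_def by auto
    have aq: "algebraic TYPE('q)" using p unfolding precoherent_q_def by blast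
    have "blooming_q mult" using A p by blast
    then show "algebraic TYPE('m) \<and> blooming_m mult act" unfolding blooming_m_def
      using am lowc_adj[OF cq aq] lowc_adj[OF cm am] bloom_from_closure[OF cq cm cm bm aq am am cl]
      by (intro conjI exI[of _ lowc]) auto
  next
    assume "algebraic TYPE('m) \<and> blooming_m mult act"
    then obtain fQ g where am: "algebraic TYPE('m)" and fQ: "sigma_left_adjoint fQ"
      and g: "sigma_left_adjoint g"
      and fe: "\<forall>q m. susp_eq (g (act q m)) (set_mult act (fQ q) (g m))"
      unfolding blooming_m_def by blast
    show "precoherent_m act" unfolding precoherent_m_def
      using am closure_from_bloom[OF cq cm cm bm fQ g g] fe unfolding susp_eq_def by auto
  qed
  show ?thesis using A B by blast
qed

end
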